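(* Let $\mathcal A$ be a Scott continuous, naturally ordered, partial semiring. For any family $(f_i:X\to\mathcal W(Y))_{i\in I}$ of Scott continuous functions and any directed set $D\subseteq X$, \[\sup_{x\in D}\sum_{i\in I}f_i(x)=\sum_{i\in I}f_i(\sup D).\]
   Context: A partial semiring $\mathcal A=\langle U,+,\cdot,\mathbf 0,\mathbf 1\rangle$: $\langle U,+,\mathbf 0\rangle$ is a commutative monoid with $+$ possibly partial, $\langle U,\cdot,\mathbf 1\rangle$ a monoid with total $\cdot$, two-sided distributivity, $\mathbf 0$ annihilates. Natural order: $u\le v$ iff $u+w=v$ for some $w$; naturally ordered means this is a partial order. Scott continuous: for every directed $D\subseteq U$ and $y\in U$, $\sup_{x\in D}(x+y)=(\sup D)+y$, $\sup_{x\in D}(x\cdot y)=(\sup D)\cdot y$, $\sup_{x\in D}(y\cdot x)=y\cdot\sup D$. Standing assumption: $\mathcal A$ has a top element. $\sum_{i\in I}u_i$ is the supremum of all finite sums over finite subsets of $I$. $\mathcal W(Y)$ is the set of $m:Y\to U$ with countable support $\{y:m(y)\ne\mathbf 0\}$ and defined mass $\sum_{y\in\mathrm{supp}(m)}m(y)$; sums of weighting functions are pointwise, and $\mathcal W(Y)$ is ordered by $m_1\sqsubseteq m_2$ iff $m_1+m=m_2$ for some $m$. $X$ is a partially ordered set in which the suprema considered exist; a function is Scott continuous if it preserves suprema of directed sets. *)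

theory Defs
  imports Main "HOL-Library.Countable_Set"
begin

text \<open>A partial semiring on the carrier UNIV of type 'a: partial addition
  add (None = undefined), total multiplication mul, zero z, one e.\<close>

definition addopt :: "('a \<Rightarrow> 'a \<Rightarrow> 'a option) \<Rightarrow> 'a option \<Rightarrow> 'a option \<Rightarrow> 'a option" where
  "addopt add a b = (case (a, b) of (Some x, Some y) \<Rightarrow> add x y | _ \<Rightarrow> None)"

definition partial_semiring ::
  "('a \<Rightarrow> 'a \<Rightarrow> 'a option) \<Rightarrow> ('a \<Rightarrow> 'a \<Rightarrow> 'a) \<Rightarrow> 'a \<Rightarrow> 'a \<Rightarrow> bool" where
  "partial_semiring add mul z e \<longleftrightarrow>
     (\<forall>u v. add u v = add v u) \<and>
     (\<forall>u v w. addopt add (add u v) (Some w) = addopt add (Some u) (add v w)) \<and>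
     (\<forall>u. add z u = Some u) \<and>
     (\<forall>u v w. mul (mul u v) w = mul u (mul v w)) \<and>
     (\<forall>u. mul e u = u \<and> mul u e = u) \<and>
     (\<forall>u v w s. add u v = Some s \<longrightarrow>
        add (mul w u) (mul w v) = Some (mul w s) \<and> add (mul u w) (mul v w) = Some (mul s w)) \<and>
     (\<forall>u. mul z u = z \<and> mul u z = z)"

definition nat_le :: "('a \<Rightarrow> 'a \<Rightarrow> 'a option) \<Rightarrow> 'a \<Rightarrow> 'a \<Rightarrow> bool" where
  "nat_le add u v \<longleftrightarrow> (\<exists>w. add u w = Some v)"

definition naturally_ordered :: "('a \<Rightarrow> 'a \<Rightarrow> 'a option) \<Rightarrow> bool" where
  "naturally_ordered add \<longleftrightarrow> partial_order_on UNIV {(u, v). nat_le add u v}"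

definition has_top :: "('a \<Rightarrow> 'a \<Rightarrow> 'a option) \<Rightarrow> bool" where
  "has_top add \<longleftrightarrow> (\<exists>t. \<forall>u. nat_le add u t)"

definition directed_set :: "('b \<Rightarrow> 'b \<Rightarrow> bool) \<Rightarrow> 'b set \<Rightarrow> bool" where
  "directed_set le D \<longleftrightarrow> D \<noteq> {} \<and> (\<forall>a\<in>D. \<forall>b\<in>D. \<exists>c\<in>D. le a c \<and> le b c)"

definition is_lub_on :: "'b set \<Rightarrow> ('b \<Rightarrow> 'b \<Rightarrow> bool) \<Rightarrow> 'b set \<Rightarrow> 'b \<Rightarrow> bool" where
  "is_lub_on C le A s \<longleftrightarrow> s \<in> C \<and> (\<forall>a\<in>A. le a s) \<and> (\<forall>u\<in>C. (\<forall>a\<in>A. le a u) \<longrightarrow> le s u)"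

text \<open>Scott continuity of the partial semiring: directed sets have suprema, and
  addition / multiplication preserve them (addition in the Kleene sense).\<close>
definition scott_continuous_sr ::
  "('a \<Rightarrow> 'a \<Rightarrow> 'a option) \<Rightarrow> ('a \<Rightarrow> 'a \<Rightarrow> 'a) \<Rightarrow> bool" where
  "scott_continuous_sr add mul \<longleftrightarrow>
     (\<forall>D. directed_set (nat_le add) D \<longrightarrow> (\<exists>s. is_lub_on UNIV (nat_le add) D s)) \<and>
     (\<forall>D s y. directed_set (nat_le add) D \<and> is_lub_on UNIV (nat_le add) D s \<longrightarrow>
        (add s y \<noteq> None \<longleftrightarrow> (\<forall>x\<in>D. add x y \<noteq> None)) \<and>
        (\<forall>t. add s y = Some t \<longrightarrow>
               is_lub_on UNIV (nat_le add) {the (add x y) | x. x \<in> D} t) \<and>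
        is_lub_on UNIV (nat_le add) ((\<lambda>x. mul x y) ` D) (mul s y) \<and>
        is_lub_on UNIV (nat_le add) ((\<lambda>x. mul y x) ` D) (mul y s))"

inductive has_fsum :: "('b \<Rightarrow> 'b \<Rightarrow> 'b option) \<Rightarrow> 'b \<Rightarrow> ('i \<Rightarrow> 'b) \<Rightarrow> 'i set \<Rightarrow> 'b \<Rightarrow> bool"
  for add z g where
  fsum_empty: "has_fsum add z g {} z"
| fsum_insert: "has_fsum add z g F s \<Longrightarrow> i \<notin> F \<Longrightarrow> add s (g i) = Some t
                 \<Longrightarrow> has_fsum add z g (insert i F) t"

definition has_psum ::
  "'b set \<Rightarrow> ('b \<Rightarrow> 'b \<Rightarrow> bool) \<Rightarrow> ('b \<Rightarrow> 'b \<Rightarrow> 'b option) \<Rightarrow> 'b \<Rightarrow> ('i \<Rightarrow> 'b) \<Rightarrow> 'i set \<Rightarrow> 'b \<Rightarrow> bool" where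
  "has_psum C le add z g I s \<longleftrightarrow>
     (\<forall>F. finite F \<and> F \<subseteq> I \<longrightarrow> (\<exists>t. has_fsum add z g F t)) \<and>
     is_lub_on C le {t. \<exists>F. finite F \<and> F \<subseteq> I \<and> has_fsum add z g F t} s"

definition supp_w :: "'a \<Rightarrow> ('y \<Rightarrow> 'a) \<Rightarrow> 'y set" where
  "supp_w z m = {y. m y \<noteq> z}"

definition Wset :: "('a \<Rightarrow> 'a \<Rightarrow> 'a option) \<Rightarrow> 'a \<Rightarrow> ('y \<Rightarrow> 'a) set" where
  "Wset add z = {m. countable (supp_w z m) \<and>
                    (\<exists>s. has_psum UNIV (nat_le add) add z m (supp_w z m) s)}"

definition addW :: "('a \<Rightarrow> 'a \<Rightarrow> 'a option) \<Rightarrow> 'a \<Rightarrow> ('y \<Rightarrow> 'a) \<Rightarrow> ('y \<Rightarrow> 'a) \<Rightarrow> ('y \<Rightarrow> 'a) option" where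
  "addW add z m1 m2 =
     (if m1 \<in> Wset add z \<and> m2 \<in> Wset add z \<and> (\<forall>y. add (m1 y) (m2 y) \<noteq> None)
         \<and> (\<lambda>y. the (add (m1 y) (m2 y))) \<in> Wset add z
      then Some (\<lambda>y. the (add (m1 y) (m2 y))) else None)"

definition zeroW :: "'a \<Rightarrow> 'y \<Rightarrow> 'a" where
  "zeroW z = (\<lambda>_. z)"

definition leW :: "('a \<Rightarrow> 'a \<Rightarrow> 'a option) \<Rightarrow> 'a \<Rightarrow> ('y \<Rightarrow> 'a) \<Rightarrow> ('y \<Rightarrow> 'a) \<Rightarrow> bool" where
  "leW add z = nat_le (addW add z)"

definition has_sumW :: "('a \<Rightarrow> 'a \<Rightarrow> 'a option) \<Rightarrow> 'a \<Rightarrow> ('i \<Rightarrow> 'y \<Rightarrow> 'a) \<Rightarrow> 'i set \<Rightarrow> ('y \<Rightarrow> 'a) \<Rightarrow> bool" where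
  "has_sumW add z g I m = has_psum (Wset add z) (leW add z) (addW add z) (zeroW z) g I m"

definition scott_cont_W :: "('a \<Rightarrow> 'a \<Rightarrow> 'a option) \<Rightarrow> 'a \<Rightarrow> ('x::order \<Rightarrow> 'y \<Rightarrow> 'a) \<Rightarrow> bool" where
  "scott_cont_W add z f \<longleftrightarrow>
     (\<forall>x. f x \<in> Wset add z) \<and>
     (\<forall>D s. directed_set (\<le>) D \<and> is_lub_on UNIV (\<le>) D s \<longrightarrow>
        is_lub_on (Wset add z) (leW add z) (f ` D) (f s))"

end

theory Submission imports Defs begin

lemma fsum_finite: "has_fsum add z g F t \<Longrightarrow> finite F"
  by (induction rule: has_fsum.induct) auto

lemma assoc1:
  assumes assoc: "\<And>u v w. addopt add (add u v) (Some w) = addopt add (Some u) (add v w)"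
  and "add a b = Some u" "add u c = Some t"
  shows "\<exists>w. add b c = Some w \<and> add a w = Some t"
proof -
  from assoc[of a b c] assms(2,3) have "addopt add (Some a) (add b c) = Some t" by (simp add: addopt_def)
  then show ?thesis by (auto simp: addopt_def split: option.splits)
qed

lemma assoc2:
  assumes assoc: "\<And>u v w. addopt add (add u v) (Some w) = addopt add (Some u) (add v w)"
  and "add b c = Some w" "add a w = Some t"
  shows "\<exists>u. add a b = Some u \<and> add u c = Some t"
proof -
  from assoc[of a b c] assms(2,3) have "addopt add (add a b) (Some c) = Some t" by (simp add: addopt_def)
  then show ?thesis by (auto simp: addopt_def split: option.splits)
qed

lemma swap_lemma:
  assumes comm: "\<And>u v. add u v = add v u"
  and assoc: "\<And>u v w. addopt add (add u v) (Some w) = addopt add (Some u) (add v w)"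
  and "add a b = Some u" "add u c = Some t"
  shows "\<exists>v. add a c = Some v \<and> add v b = Some t"
proof -
  obtain w where w: "add b c = Some w" "add a w = Some t" using assoc1[OF assoc assms(3,4)] by blast
  have "add c b = Some w" using w comm by metis
  then show ?thesis using assoc2[OF assoc _ w(2)] by blast
qed

lemma fsum_remove:
  assumes comm: "\<And>u v. add u v = add v u"
  and assoc: "\<And>u v w. addopt add (add u v) (Some w) = addopt add (Some u) (add v w)"
  shows "has_fsum add z g F' t \<Longrightarrow> i \<in> F' \<Longrightarrow> \<exists>s. has_fsum add z g (F' - {i}) s \<and> add s (g i) = Some t"
proof (induction rule: has_fsum.induct)
  case fsum_empty
  then show ?case by simp
next
  case (fsum_insert F s j t)
  show ?case
  proof (cases "j = i")
    case True
    then have "insert j F - {i} = F" using fsum_insert by auto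
    then show ?thesis using fsum_insert True by auto
  next
    case False
    then have "i \<in> F" using fsum_insert by auto
    then obtain s0 where s0: "has_fsum add z g (F - {i}) s0" "add s0 (g i) = Some s" using fsum_insert by blast
    obtain v where v: "add s0 (g j) = Some v" "add v (g i) = Some t"
      using swap_lemma[OF comm assoc s0(2) fsum_insert(3)] by blast
    have "has_fsum add z g (insert j (F - {i})) v"
      by (rule has_fsum.fsum_insert[OF s0(1) _ v(1)]) (use fsum_insert in auto)
    moreover have "insert j (F - {i}) = insert j F - {i}" using False by auto
    ultimately show ?thesis using v by auto
  qed
qed

lemma fsum_unique:
  assumes comm: "\<And>u v. add u v = add v u"
  and assoc: "\<And>u v w. addopt add (add u v) (Some w) = addopt add (Some u) (add v w)"
  shows "has_fsum add z g F t \<Longrightarrow> has_fsum add z g F t' \<Longrightarrow> t = t'"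
proof (induction arbitrary: t' rule: has_fsum.induct)
  case fsum_empty
  then show ?case by (cases rule: has_fsum.cases) auto
next
  case (fsum_insert F s i t)
  obtain s' where s': "has_fsum add z g (insert i F - {i}) s'" "add s' (g i) = Some t'"
    using fsum_remove[OF comm assoc fsum_insert.prems] by blast
  have "insert i F - {i} = F" using fsum_insert.hyps(2) by auto
  then have "s = s'" using fsum_insert.IH s' by auto
  then show ?case using fsum_insert.hyps(3) s' by simp
qed

lemma fsum_cong:
  "has_fsum add z g F t \<Longrightarrow> (\<And>i. i \<in> F \<Longrightarrow> g i = g' i) \<Longrightarrow> has_fsum add z g' F t"
proof (induction rule: has_fsum.induct)
  case fsum_empty
  show ?case by (rule has_fsum.fsum_empty)
next
  case (fsum_insert F s i t)
  then show ?case by (auto intro: has_fsum.fsum_insert)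
qed


locale PS =
  fixes add :: "'a \<Rightarrow> 'a \<Rightarrow> 'a option" and mul :: "'a \<Rightarrow> 'a \<Rightarrow> 'a" and z e :: 'a
  assumes ps: "partial_semiring add mul z e" and no: "naturally_ordered add"
    and sc: "scott_continuous_sr add mul"
begin

abbreviation le (infix "\<preceq>" 50) where "le \<equiv> nat_le add"

lemma comm: "add u v = add v u" using ps unfolding partial_semiring_def by blast
lemma assoc: "addopt add (add u v) (Some w) = addopt add (Some u) (add v w)"
  using ps unfolding partial_semiring_def by blast
lemma zero: "add z u = Some u" using ps unfolding partial_semiring_def by blast
lemma zero_r: "add u z = Some u" using zero comm by metis

lemma refl: "u \<preceq> u" unfolding nat_le_def using zero_r by blast
lemma trans: "u \<preceq> v \<Longrightarrow> v \<preceq> w \<Longrightarrow> u \<preceq> w"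
  unfolding nat_le_def using assoc1[OF assoc] by metis
lemma antisym: "u \<preceq> v \<Longrightarrow> v \<preceq> u \<Longrightarrow> u = v"
  using no unfolding naturally_ordered_def partial_order_on_def antisym_def by blast
lemma bot: "z \<preceq> u" unfolding nat_le_def using zero by blast
lemma le_z: "u \<preceq> z \<Longrightarrow> u = z" using antisym bot by blast
lemma le_add: "add a b = Some c \<Longrightarrow> a \<preceq> c" unfolding nat_le_def by blast
lemma le_add2: "add a b = Some c \<Longrightarrow> b \<preceq> c" unfolding nat_le_def using comm by metis

lemma add_mono:
  assumes "add a' b' = Some c'" "a \<preceq> a'" "b \<preceq> b'"
  shows "\<exists>c. add a b = Some c \<and> c \<preceq> c'"
proof -
  obtain p where p: "add a p = Some a'" using assms(2) unfolding nat_le_def by blast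
  obtain q where q: "add b q = Some b'" using assms(3) unfolding nat_le_def by blast
  obtain w where w: "add p b' = Some w" "add a w = Some c'" using assoc1[OF assoc p assms(1)] by blast
  obtain k where k: "add p b = Some k" "add k q = Some w" using assoc2[OF assoc q w(1)] by blast
  obtain k' where k': "add a k = Some k'" "add k' q = Some c'" using assoc2[OF assoc k(2) w(2)] by blast
  have "add b p = Some k" using k(1) comm by metis
  then obtain c where c: "add a b = Some c" "add c p = Some k'" using assoc2[OF assoc _ k'(1)] by blast
  have "c \<preceq> c'" using trans[OF le_add[OF c(2)] le_add[OF k'(2)]] .
  then show ?thesis using c by blast
qed

lemma lub_unique: "is_lub_on UNIV le A s \<Longrightarrow> is_lub_on UNIV le A s' \<Longrightarrow> s = s'"
  unfolding is_lub_on_def using antisym by blast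

lemma dlub: "directed_set le D \<Longrightarrow> \<exists>s. is_lub_on UNIV le D s"
  using sc unfolding scott_continuous_sr_def by blast

lemma sc_add: "directed_set le D \<Longrightarrow> is_lub_on UNIV le D s \<Longrightarrow>
   (add s y \<noteq> None \<longleftrightarrow> (\<forall>x\<in>D. add x y \<noteq> None)) \<and>
   (\<forall>t. add s y = Some t \<longrightarrow> is_lub_on UNIV le {the (add x y) | x. x \<in> D} t)"
  using sc unfolding scott_continuous_sr_def by blast

lemma fremove: "has_fsum add z g F' t \<Longrightarrow> i \<in> F' \<Longrightarrow> \<exists>s. has_fsum add z g (F' - {i}) s \<and> add s (g i) = Some t"
  by (rule fsum_remove[OF comm assoc])
lemma funique: "has_fsum add z g F t \<Longrightarrow> has_fsum add z g F t' \<Longrightarrow> t = t'"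
  by (rule fsum_unique[OF comm assoc])

lemma fsum_mono: "has_fsum add z b F tb \<Longrightarrow> (\<forall>i\<in>F. a i \<preceq> b i) \<Longrightarrow> \<exists>ta. has_fsum add z a F ta \<and> ta \<preceq> tb"
proof (induction rule: has_fsum.induct)
  case fsum_empty
  have "has_fsum add z a {} z" by (rule has_fsum.fsum_empty)
  then show ?case using refl by blast
next
  case (fsum_insert F s i t)
  obtain sa where sa: "has_fsum add z a F sa" "sa \<preceq> s" using fsum_insert by auto
  obtain c where c: "add sa (a i) = Some c" "c \<preceq> t" using add_mono[OF fsum_insert.hyps(3) sa(2)] fsum_insert.prems by auto
  show ?case using has_fsum.fsum_insert[OF sa(1) fsum_insert.hyps(2) c(1)] c(2) by blast
qed

lemma fsum_sub: "has_fsum add z g F' s' \<Longrightarrow> F \<subseteq> F' \<Longrightarrow> \<exists>s. has_fsum add z g F s \<and> s \<preceq> s'"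
proof (induction arbitrary: F rule: has_fsum.induct)
  case fsum_empty
  then have "F = {}" by simp
  moreover have "has_fsum add z g {} z" by (rule has_fsum.fsum_empty)
  ultimately show ?case using refl by blast
next
  case (fsum_insert F'' s i t)
  show ?case
  proof (cases "i \<in> F")
    case True
    then have "F - {i} \<subseteq> F''" using fsum_insert.prems by auto
    then obtain s0 where s0: "has_fsum add z g (F - {i}) s0" "s0 \<preceq> s" using fsum_insert.IH by blast
    obtain c where c: "add s0 (g i) = Some c" "c \<preceq> t" using add_mono[OF fsum_insert.hyps(3) s0(2) refl] by blast
    have "has_fsum add z g (insert i (F - {i})) c" by (rule has_fsum.fsum_insert[OF s0(1) _ c(1)]) auto
    moreover have "insert i (F - {i}) = F" using True by auto
    ultimately show ?thesis using c by auto
  next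
    case False
    then have "F \<subseteq> F''" using fsum_insert.prems by auto
    then obtain s0 where s0: "has_fsum add z g F s0" "s0 \<preceq> s" using fsum_insert.IH by blast
    then show ?thesis using trans[OF s0(2) le_add[OF fsum_insert.hyps(3)]] by blast
  qed
qed

lemma fsum_directed:
  assumes "\<forall>F. finite F \<and> F \<subseteq> J \<longrightarrow> (\<exists>t. has_fsum add z g F t)"
  shows "directed_set le {t. \<exists>F. finite F \<and> F \<subseteq> J \<and> has_fsum add z g F t}"
  unfolding directed_set_def
proof (intro conjI ballI)
  show "{t. \<exists>F. finite F \<and> F \<subseteq> J \<and> has_fsum add z g F t} \<noteq> {}"
  proof -
    have "has_fsum add z g {} z" by (rule has_fsum.fsum_empty)
    then have "z \<in> {t. \<exists>F. finite F \<and> F \<subseteq> J \<and> has_fsum add z g F t}" by blast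
    then show ?thesis by blast
  qed
next
  fix a b assume a: "a \<in> {t. \<exists>F. finite F \<and> F \<subseteq> J \<and> has_fsum add z g F t}"
    and b: "b \<in> {t. \<exists>F. finite F \<and> F \<subseteq> J \<and> has_fsum add z g F t}"
  then obtain F1 F2 where f: "finite F1" "F1 \<subseteq> J" "has_fsum add z g F1 a" "finite F2" "F2 \<subseteq> J" "has_fsum add z g F2 b" by blast
  then obtain c where c: "has_fsum add z g (F1 \<union> F2) c" using assms by (meson finite_UnI le_sup_iff)
  obtain a' where a': "has_fsum add z g F1 a'" "a' \<preceq> c" using fsum_sub[OF c] by blast
  obtain b' where b': "has_fsum add z g F2 b'" "b' \<preceq> c" using fsum_sub[OF c] by blast
  have "a = a'" "b = b'" using funique f a' b' by blast+
  then show "\<exists>c\<in>{t. \<exists>F. finite F \<and> F \<subseteq> J \<and> has_fsum add z g F t}. a \<preceq> c \<and> b \<preceq> c"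
    using a' b' c f by (metis (mono_tags, lifting) finite_UnI le_sup_iff mem_Collect_eq)
qed

end

context PS begin

abbreviation W where "W \<equiv> Wset add z"

lemma psum_exists:
  assumes "\<forall>F. finite F \<and> F \<subseteq> J \<longrightarrow> (\<exists>t. has_fsum add z g F t)"
  shows "\<exists>s. has_psum UNIV le add z g J s"
  using dlub[OF fsum_directed[OF assms]] assms unfolding has_psum_def by blast

lemma W_down:
  assumes "m' \<in> W" "\<And>y. m y \<preceq> m' y"
  shows "m \<in> W"
proof -
  have sub: "supp_w z m \<subseteq> supp_w z m'"
    unfolding supp_w_def using assms(2) le_z by (metis (mono_tags, lifting) Collect_mono)
  obtain s' where s': "has_psum UNIV le add z m' (supp_w z m') s'" "countable (supp_w z m')"
    using assms(1) unfolding Wset_def by blast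
  have "\<forall>F. finite F \<and> F \<subseteq> supp_w z m \<longrightarrow> (\<exists>t. has_fsum add z m F t)"
  proof (intro allI impI)
    fix F assume F: "finite F \<and> F \<subseteq> supp_w z m"
    then obtain t' where "has_fsum add z m' F t'" using s'(1) sub unfolding has_psum_def by blast
    then show "\<exists>t. has_fsum add z m F t" using fsum_mono assms(2) by blast
  qed
  then show ?thesis using psum_exists countable_subset[OF sub s'(2)] unfolding Wset_def by blast
qed

lemma zeroW_in: "(zeroW z :: 'y \<Rightarrow> 'a) \<in> W"
proof -
  have "\<forall>F. finite F \<and> F \<subseteq> supp_w z (zeroW z :: 'y \<Rightarrow> 'a) \<longrightarrow> (\<exists>t. has_fsum add z (zeroW z :: 'y \<Rightarrow> 'a) F t)"
  proof (intro allI impI)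
    fix F assume "finite F \<and> F \<subseteq> supp_w z (zeroW z :: 'y \<Rightarrow> 'a)"
    then have "F = {}" unfolding supp_w_def zeroW_def by auto
    moreover have "has_fsum add z (zeroW z :: 'y \<Rightarrow> 'a) {} z" by (rule has_fsum.fsum_empty)
    ultimately show "\<exists>t. has_fsum add z (zeroW z :: 'y \<Rightarrow> 'a) F t" by blast
  qed
  then obtain s where "has_psum UNIV le add z (zeroW z :: 'y \<Rightarrow> 'a) (supp_w z (zeroW z :: 'y \<Rightarrow> 'a)) s" using psum_exists by blast
  moreover have "countable (supp_w z (zeroW z :: 'y \<Rightarrow> 'a))" unfolding supp_w_def zeroW_def by simp
  ultimately show ?thesis unfolding Wset_def by blast
qed

lemma addW_Some: "addW add z m1 m2 = Some m \<longleftrightarrow>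
   m1 \<in> W \<and> m2 \<in> W \<and> m \<in> W \<and> (\<forall>y. add (m1 y) (m2 y) = Some (m y))"
proof
  assume a: "addW add z m1 m2 = Some m"
  then have c: "m1 \<in> W \<and> m2 \<in> W \<and> (\<forall>y. add (m1 y) (m2 y) \<noteq> None)
         \<and> (\<lambda>y. the (add (m1 y) (m2 y))) \<in> W" and m: "m = (\<lambda>y. the (add (m1 y) (m2 y)))"
    unfolding addW_def by (auto split: if_splits)
  then show "m1 \<in> W \<and> m2 \<in> W \<and> m \<in> W \<and> (\<forall>y. add (m1 y) (m2 y) = Some (m y))" by auto
next
  assume a: "m1 \<in> W \<and> m2 \<in> W \<and> m \<in> W \<and> (\<forall>y. add (m1 y) (m2 y) = Some (m y))"
  then have e: "(\<lambda>y. the (add (m1 y) (m2 y))) = m" by auto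
  then show "addW add z m1 m2 = Some m" using a unfolding addW_def by auto
qed

lemma leW_iff: "leW add z m m' \<longleftrightarrow> m \<in> W \<and> m' \<in> W \<and> (\<forall>y. m y \<preceq> m' y)"
proof
  assume "leW add z m m'"
  then obtain w where "addW add z m w = Some m'" unfolding leW_def nat_le_def by blast
  then show "m \<in> W \<and> m' \<in> W \<and> (\<forall>y. m y \<preceq> m' y)" unfolding addW_Some using le_add by blast
next
  assume a: "m \<in> W \<and> m' \<in> W \<and> (\<forall>y. m y \<preceq> m' y)"
  define w where "w = (\<lambda>y. SOME w. add (m y) w = Some (m' y))"
  have w: "add (m y) (w y) = Some (m' y)" for y
    unfolding w_def using a unfolding nat_le_def by (metis (mono_tags, lifting) someI_ex)
  have "w \<in> W" using W_down[of m' w] a w le_add2 by blast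
  then have "addW add z m w = Some m'" using addW_Some a w by blast
  then show "leW add z m m'" unfolding leW_def nat_le_def by blast
qed

lemma Wfsum_char1:
  "has_fsum (addW add z) (zeroW z) G F T \<Longrightarrow> finite F \<and> T \<in> W \<and> (\<forall>y. has_fsum add z (\<lambda>i. G i y) F (T y))"
proof (induction rule: has_fsum.induct)
  case fsum_empty
  then show ?case using zeroW_in by (auto simp: zeroW_def intro: has_fsum.fsum_empty)
next
  case (fsum_insert F s i t)
  then show ?case unfolding addW_Some by (auto intro: has_fsum.fsum_insert)
qed

lemma Wfsum_char2:
  shows "finite F \<Longrightarrow> (\<forall>i\<in>F. G i \<in> W) \<Longrightarrow> T \<in> W \<Longrightarrow> (\<forall>y. has_fsum add z (\<lambda>i. G i y) F (T y)) \<Longrightarrow> has_fsum (addW add z) (zeroW z) G F T"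
proof (induction F arbitrary: T rule: finite_induct)
  case empty
  have "T y = z" for y using empty.prems(3)[rule_format, of y] by (cases rule: has_fsum.cases) auto
  then have "T = zeroW z" unfolding zeroW_def by auto
  then show ?case using has_fsum.fsum_empty by simp
next
  case (insert i F)
  have "\<exists>sy. has_fsum add z (\<lambda>i. G i y) F sy \<and> add sy (G i y) = Some (T y)" for y
    using fremove[OF insert.prems(3)[rule_format, of y], of i] insert.hyps(2) by auto
  then obtain s where s: "\<And>y. has_fsum add z (\<lambda>i. G i y) F (s y) \<and> add (s y) (G i y) = Some (T y)"
    by metis
  have "s \<in> W" using W_down[OF insert.prems(2)] s le_add by blast
  then have hs: "has_fsum (addW add z) (zeroW z) G F s" using insert.IH insert.prems(1) s by blast
  have "addW add z s (G i) = Some T" using addW_Some \<open>s \<in> W\<close> insert.prems(1,2) s by blast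
  then show ?case using has_fsum.fsum_insert[OF hs insert.hyps(2)] by blast
qed

lemma Wfsum_char:
  assumes "\<forall>i\<in>F. G i \<in> W"
  shows "has_fsum (addW add z) (zeroW z) G F T \<longleftrightarrow> finite F \<and> T \<in> W \<and> (\<forall>y. has_fsum add z (\<lambda>i. G i y) F (T y))"
proof
  assume "has_fsum (addW add z) (zeroW z) G F T"
  then show "finite F \<and> T \<in> W \<and> (\<forall>y. has_fsum add z (\<lambda>i. G i y) F (T y))" by (rule Wfsum_char1)
next
  assume a: "finite F \<and> T \<in> W \<and> (\<forall>y. has_fsum add z (\<lambda>i. G i y) F (T y))"
  show "has_fsum (addW add z) (zeroW z) G F T" by (rule Wfsum_char2[of F G T]) (use assms a in auto)
qed

end

context PS begin

lemma fsum_empty_iff: "has_fsum add z g {} t \<longleftrightarrow> t = z"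
  by (auto elim: has_fsum.cases intro: has_fsum.fsum_empty)

lemma fsum_insert_iff: "i \<notin> F \<Longrightarrow> has_fsum add z g (insert i F) t \<longleftrightarrow> (\<exists>s. has_fsum add z g F s \<and> add s (g i) = Some t)"
proof
  assume a: "i \<notin> F" "has_fsum add z g (insert i F) t"
  have e: "insert i F - {i} = F" using a(1) by simp
  obtain s where "has_fsum add z g (insert i F - {i}) s \<and> add s (g i) = Some t"
    using fremove[OF a(2) insertI1] by blast
  then show "\<exists>s. has_fsum add z g F s \<and> add s (g i) = Some t" unfolding e by blast
next
  assume a: "i \<notin> F" "\<exists>s. has_fsum add z g F s \<and> add s (g i) = Some t"
  then obtain s where s: "has_fsum add z g F s" "add s (g i) = Some t" by blast
  show "has_fsum add z g (insert i F) t" by (rule has_fsum.fsum_insert[OF s(1) a(1) s(2)])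
qed

definition Hyp :: "'x::order set \<Rightarrow> ('i \<Rightarrow> 'x \<Rightarrow> 'a) \<Rightarrow> ('i \<Rightarrow> 'a) \<Rightarrow> 'i set \<Rightarrow> bool" where
  "Hyp D a b F \<longleftrightarrow> (\<forall>j\<in>F. (\<forall>x\<in>D. \<forall>x'\<in>D. x \<le> x' \<longrightarrow> a j x \<preceq> a j x') \<and> is_lub_on UNIV le (a j ` D) (b j))"

lemma img_directed:
  assumes dir: "directed_set (\<le>) D" and mono: "\<forall>x\<in>D. \<forall>x'\<in>D. x \<le> x' \<longrightarrow> h x \<preceq> h x'"
  shows "directed_set le (h ` D)"
  unfolding directed_set_def
proof (intro conjI ballI)
  show "h ` D \<noteq> {}" using dir unfolding directed_set_def by blast
next
  fix u v assume "u \<in> h ` D" "v \<in> h ` D"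
  then obtain x1 x2 where x: "x1 \<in> D" "x2 \<in> D" "u = h x1" "v = h x2" by blast
  then obtain x3 where x3: "x3 \<in> D" "x1 \<le> x3" "x2 \<le> x3" using dir unfolding directed_set_def by blast
  then have "u \<preceq> h x3" "v \<preceq> h x3" using mono x by blast+
  then show "\<exists>c\<in>h ` D. u \<preceq> c \<and> v \<preceq> c" using x3 by blast
qed

lemma S_directed:
  assumes dir: "directed_set (\<le>) D" and H: "Hyp D a b F"
    and def: "\<forall>x\<in>D. \<exists>t. has_fsum add z (\<lambda>i. a i x) F t"
  shows "directed_set le {t'. \<exists>x\<in>D. has_fsum add z (\<lambda>i. a i x) F t'}"
  unfolding directed_set_def
proof (intro conjI ballI)
  obtain x0 where "x0 \<in> D" using dir unfolding directed_set_def by blast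
  then show "{t'. \<exists>x\<in>D. has_fsum add z (\<lambda>i. a i x) F t'} \<noteq> {}" using def by blast
next
  fix t1 t2 assume "t1 \<in> {t'. \<exists>x\<in>D. has_fsum add z (\<lambda>i. a i x) F t'}" "t2 \<in> {t'. \<exists>x\<in>D. has_fsum add z (\<lambda>i. a i x) F t'}"
  then obtain x1 x2 where x: "x1 \<in> D" "x2 \<in> D" "has_fsum add z (\<lambda>i. a i x1) F t1" "has_fsum add z (\<lambda>i. a i x2) F t2" by blast
  then obtain x3 where x3: "x3 \<in> D" "x1 \<le> x3" "x2 \<le> x3" using dir unfolding directed_set_def by blast
  then obtain t3 where t3: "has_fsum add z (\<lambda>i. a i x3) F t3" using def by blast
  have m1: "\<forall>i\<in>F. a i x1 \<preceq> a i x3" and m2: "\<forall>i\<in>F. a i x2 \<preceq> a i x3" using H x x3 unfolding Hyp_def by blast+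
  obtain ta where "has_fsum add z (\<lambda>i. a i x1) F ta" "ta \<preceq> t3" using fsum_mono[OF t3 m1] by blast
  moreover obtain tb where "has_fsum add z (\<lambda>i. a i x2) F tb" "tb \<preceq> t3" using fsum_mono[OF t3 m2] by blast
  ultimately have "t1 \<preceq> t3" "t2 \<preceq> t3" using funique x by blast+
  then show "\<exists>c\<in>{t'. \<exists>x\<in>D. has_fsum add z (\<lambda>i. a i x) F t'}. t1 \<preceq> c \<and> t2 \<preceq> c" using t3 x3 by blast
qed

lemma fsum_cont:
  assumes dir: "directed_set (\<le>) D"
  shows "finite F \<Longrightarrow> Hyp D a b F \<Longrightarrow>
    ((\<exists>t. has_fsum add z b F t) \<longleftrightarrow> (\<forall>x\<in>D. \<exists>t. has_fsum add z (\<lambda>i. a i x) F t)) \<and>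
    (\<forall>t. has_fsum add z b F t \<longrightarrow> is_lub_on UNIV le {t'. \<exists>x\<in>D. has_fsum add z (\<lambda>i. a i x) F t'} t)"
proof (induction F rule: finite_induct)
  case empty
  obtain x0 where "x0 \<in> D" using dir unfolding directed_set_def by blast
  then have "{t'. \<exists>x\<in>D. has_fsum add z (\<lambda>i. a i x) {} t'} = {z}" unfolding fsum_empty_iff by blast
  then show ?case unfolding fsum_empty_iff is_lub_on_def using refl by auto
next
  case (insert i F)
  let ?F' = "insert i F"
  let ?S = "\<lambda>G. {t'. \<exists>x\<in>D. has_fsum add z (\<lambda>i. a i x) G t'}"
  have HF: "Hyp D a b F" using insert.prems unfolding Hyp_def by blast
  have monoi: "\<forall>x\<in>D. \<forall>x'\<in>D. x \<le> x' \<longrightarrow> a i x \<preceq> a i x'" and lubi: "is_lub_on UNIV le (a i ` D) (b i)"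
    using insert.prems unfolding Hyp_def by blast+
  note IH = insert.IH[OF HF]
  have dirai: "directed_set le (a i ` D)" using img_directed[OF dir monoi] .
  have K: "\<exists>c v''. add s (a i x') = Some c \<and> c \<preceq> v'' \<and> v'' \<in> ?S ?F'"
    if all: "\<forall>x\<in>D. \<exists>t. has_fsum add z (\<lambda>i. a i x) ?F' t" and x: "x \<in> D" "x' \<in> D"
      and s: "has_fsum add z (\<lambda>i. a i x) F s" for x x' s
  proof -
    obtain x'' where x'': "x'' \<in> D" "x \<le> x''" "x' \<le> x''" using dir x unfolding directed_set_def by blast
    obtain v'' where v'': "has_fsum add z (\<lambda>i. a i x'') ?F' v''" using all x'' by blast
    obtain s'' where s'': "has_fsum add z (\<lambda>i. a i x'') F s''" "add s'' (a i x'') = Some v''"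
      using v'' fsum_insert_iff[OF insert.hyps(2)] by blast
    have mj: "\<forall>j\<in>F. a j x \<preceq> a j x''" using HF x x'' unfolding Hyp_def by blast
    obtain ta where "has_fsum add z (\<lambda>i. a i x) F ta" "ta \<preceq> s''" using fsum_mono[OF s''(1) mj] by blast
    then have "s \<preceq> s''" using funique s by blast
    moreover have "a i x' \<preceq> a i x''" using monoi x x'' by blast
    ultimately obtain c where "add s (a i x') = Some c" "c \<preceq> v''" using add_mono[OF s''(2)] by blast
    then show ?thesis using v'' x'' by blast
  qed
  have D1: "\<forall>x\<in>D. \<exists>t. has_fsum add z (\<lambda>i. a i x) ?F' t" if t: "has_fsum add z b ?F' t" for t
  proof
    fix x assume x: "x \<in> D"
    obtain \<sigma> where \<sigma>: "has_fsum add z b F \<sigma>" "add \<sigma> (b i) = Some t" using t fsum_insert_iff[OF insert.hyps(2)] by blast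
    obtain \<sigma>x where \<sigma>x: "has_fsum add z (\<lambda>i. a i x) F \<sigma>x" using IH \<sigma>(1) x by blast
    have "\<sigma>x \<preceq> \<sigma>" using IH \<sigma>(1) \<sigma>x x unfolding is_lub_on_def by blast
    moreover have "a i x \<preceq> b i" using lubi x unfolding is_lub_on_def by blast
    ultimately obtain c where "add \<sigma>x (a i x) = Some c" using add_mono[OF \<sigma>(2)] by blast
    then show "\<exists>t. has_fsum add z (\<lambda>i. a i x) ?F' t" using \<sigma>x fsum_insert_iff[OF insert.hyps(2)] by blast
  qed
  have D2: "\<exists>t. has_fsum add z b ?F' t" if all: "\<forall>x\<in>D. \<exists>t. has_fsum add z (\<lambda>i. a i x) ?F' t"
  proof -
    have allF: "\<forall>x\<in>D. \<exists>t. has_fsum add z (\<lambda>i. a i x) F t" using all fsum_insert_iff[OF insert.hyps(2)] by blast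
    then obtain \<sigma> where \<sigma>: "has_fsum add z b F \<sigma>" using IH by blast
    have lub\<sigma>: "is_lub_on UNIV le (?S F) \<sigma>" using IH \<sigma> by blast
    have dirS: "directed_set le (?S F)" using S_directed[OF dir HF allF] .
    have "add v (b i) \<noteq> None" if v: "v \<in> ?S F" for v
    proof -
      obtain x where x: "x \<in> D" "has_fsum add z (\<lambda>i. a i x) F v" using v by blast
      have "\<forall>w\<in>a i ` D. add w v \<noteq> None"
      proof
        fix w assume "w \<in> a i ` D"
        then obtain x' where "x' \<in> D" "w = a i x'" by blast
        then show "add w v \<noteq> None" using K[OF all x(1) _ x(2)] comm by fastforce
      qed
      then have "add (b i) v \<noteq> None" using sc_add[OF dirai lubi] by blast
      then show ?thesis using comm by metis
    qed
    then have "add \<sigma> (b i) \<noteq> None" using sc_add[OF dirS lub\<sigma>] by blast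
    then show ?thesis using \<sigma> fsum_insert_iff[OF insert.hyps(2)] by fastforce
  qed
  have L: "is_lub_on UNIV le (?S ?F') t" if t: "has_fsum add z b ?F' t" for t
  proof -
    obtain \<sigma> where \<sigma>: "has_fsum add z b F \<sigma>" "add \<sigma> (b i) = Some t" using t fsum_insert_iff[OF insert.hyps(2)] by blast
    have all: "\<forall>x\<in>D. \<exists>t. has_fsum add z (\<lambda>i. a i x) ?F' t" using D1 t by blast
    have allF: "\<forall>x\<in>D. \<exists>t. has_fsum add z (\<lambda>i. a i x) F t" using all fsum_insert_iff[OF insert.hyps(2)] by blast
    have lub\<sigma>: "is_lub_on UNIV le (?S F) \<sigma>" using IH \<sigma> by blast
    have dirS: "directed_set le (?S F)" using S_directed[OF dir HF allF] .
    have ub: "v \<preceq> t" if v: "v \<in> ?S ?F'" for v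
    proof -
      obtain x where x: "x \<in> D" "has_fsum add z (\<lambda>i. a i x) ?F' v" using v by blast
      obtain \<sigma>x where \<sigma>x: "has_fsum add z (\<lambda>i. a i x) F \<sigma>x" "add \<sigma>x (a i x) = Some v"
        using x(2) fsum_insert_iff[OF insert.hyps(2)] by blast
      have "\<sigma>x \<preceq> \<sigma>" using lub\<sigma> \<sigma>x x unfolding is_lub_on_def by blast
      moreover have "a i x \<preceq> b i" using lubi x unfolding is_lub_on_def by blast
      ultimately obtain c where "add \<sigma>x (a i x) = Some c" "c \<preceq> t" using add_mono[OF \<sigma>(2)] by blast
      then show ?thesis using \<sigma>x by simp
    qed
    have least: "t \<preceq> u" if u: "\<forall>v\<in>?S ?F'. v \<preceq> u" for u
    proof -
      have tl: "is_lub_on UNIV le {the (add v (b i)) | v. v \<in> ?S F} t" using sc_add[OF dirS lub\<sigma>] \<sigma>(2) by blast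
      have "w \<preceq> u" if w: "w \<in> {the (add v (b i)) | v. v \<in> ?S F}" for w
      proof -
        obtain v where v: "v \<in> ?S F" "w = the (add v (b i))" using w by blast
        obtain x where x: "x \<in> D" "has_fsum add z (\<lambda>i. a i x) F v" using v by blast
        have "add v (b i) \<noteq> None" using sc_add[OF dirS lub\<sigma>] \<sigma>(2) v(1) by blast
        then have vb: "add (b i) v = Some w" using v(2) comm by (metis option.collapse)
        then have wl: "is_lub_on UNIV le {the (add w' v) | w'. w' \<in> a i ` D} w" using sc_add[OF dirai lubi] by blast
        have "w'' \<preceq> u" if w'': "w'' \<in> {the (add w' v) | w'. w' \<in> a i ` D}" for w''
        proof -
          obtain x' where x': "x' \<in> D" "w'' = the (add (a i x') v)" using w'' by blast
          obtain c v'' where c: "add v (a i x') = Some c" "c \<preceq> v''" "v'' \<in> ?S ?F'" using K[OF all x(1) x'(1) x(2)] by blast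
          have "add (a i x') v = Some c" using c(1) comm by metis
          then have "w'' = c" using x'(2) by simp
          moreover have "v'' \<preceq> u" using u c(3) by blast
          ultimately show ?thesis using trans c(2) by blast
        qed
        then show ?thesis using wl unfolding is_lub_on_def by blast
      qed
      then show ?thesis using tl unfolding is_lub_on_def by blast
    qed
    show ?thesis unfolding is_lub_on_def using ub least by blast
  qed
  show ?case using D1 D2 L by blast
qed

end

context PS begin

lemma f_facts:
  fixes f :: "'x::order \<Rightarrow> 'y \<Rightarrow> 'a" and D :: "'x set"
  assumes fc: "scott_cont_W add z f" and dir: "directed_set (\<le>) D" and sl: "is_lub_on UNIV (\<le>) D s"
  shows "f x \<in> W" and "x \<le> x' \<Longrightarrow> f x y \<preceq> f x' y"
    and "is_lub_on UNIV le ((\<lambda>x. f x y) ` D) (f s y)"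
proof -
  show fW: "f x \<in> W" for x using fc unfolding scott_cont_W_def by blast
  have fm: "f x y \<preceq> f x' y" if "x \<le> x'" for x x' y
  proof -
    have "directed_set (\<le>) {x, x'}" unfolding directed_set_def using that by auto
    moreover have "is_lub_on UNIV (\<le>) {x, x'} x'" unfolding is_lub_on_def using that by auto
    ultimately have "is_lub_on W (leW add z) (f ` {x, x'}) (f x')" using fc unfolding scott_cont_W_def by blast
    then have "leW add z (f x) (f x')" unfolding is_lub_on_def by blast
    then show ?thesis unfolding leW_iff by blast
  qed
  then show "x \<le> x' \<Longrightarrow> f x y \<preceq> f x' y" .
  have Wl: "is_lub_on W (leW add z) (f ` D) (f s)" using fc dir sl unfolding scott_cont_W_def by blast
  have "\<exists>p. is_lub_on UNIV le ((\<lambda>x. f x y) ` D) p" for y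
  proof -
    have m: "\<forall>x\<in>D. \<forall>x'\<in>D. x \<le> x' \<longrightarrow> f x y \<preceq> f x' y" using fm by blast
    show ?thesis using dlub[OF img_directed[OF dir m]] by simp
  qed
  then obtain P where P: "\<And>y. is_lub_on UNIV le ((\<lambda>x. f x y) ` D) (P y)" by metis
  have fxs: "f x y \<preceq> f s y" if "x \<in> D" for x y
  proof -
    have "leW add z (f x) (f s)" using Wl that unfolding is_lub_on_def by blast
    then show ?thesis unfolding leW_iff by blast
  qed
  then have Ps: "P y \<preceq> f s y" for y using P unfolding is_lub_on_def by blast
  have PW: "P \<in> W" using W_down[OF fW Ps] .
  have "leW add z (f x) P" if "x \<in> D" for x
    unfolding leW_iff using fW PW P that unfolding is_lub_on_def by blast
  then have "leW add z (f s) P" using Wl PW unfolding is_lub_on_def by blast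
  then have "f s y \<preceq> P y" unfolding leW_iff by blast
  then have "P y = f s y" using Ps antisym by blast
  then show "is_lub_on UNIV le ((\<lambda>x. f x y) ` D) (f s y)" using P by metis
qed

lemma main:
  fixes f :: "'i \<Rightarrow> 'x::order \<Rightarrow> 'y \<Rightarrow> 'a" and I :: "'i set" and D :: "'x set"
  assumes fc: "\<forall>i\<in>I. scott_cont_W add z (f i)" and dir: "directed_set (\<le>) D" and sl: "is_lub_on UNIV (\<le>) D s"
  shows "has_sumW add z (\<lambda>i. f i s) I r \<longleftrightarrow>
           (\<exists>g. (\<forall>x\<in>D. has_sumW add z (\<lambda>i. f i x) I (g x)) \<and>
                is_lub_on (Wset add z) (leW add z) (g ` D) r)"
proof -
  have fW: "f i x \<in> W" if "i \<in> I" for i x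
    using f_facts(1)[where f="f i" and D=D and s=s] fc dir sl that by blast
  have fm: "f i x y \<preceq> f i x' y" if "i \<in> I" "x \<le> x'" for i x x' y
    using f_facts(2)[where f="f i" and D=D and s=s] fc dir sl that by blast
  have fl: "is_lub_on UNIV le ((\<lambda>x. f i x y) ` D) (f i s y)" if "i \<in> I" for i y
    using f_facts(3)[where f="f i" and D=D and s=s] fc dir sl that by blast
  have xs: "\<And>x. x \<in> D \<Longrightarrow> x \<le> s" using sl unfolding is_lub_on_def by blast
  have Hy: "Hyp D (\<lambda>i x. f i x y) (\<lambda>i. f i s y) F" if "F \<subseteq> I" for F y
    unfolding Hyp_def using fm fl that by blast
  have char: "has_fsum (addW add z) (zeroW z) (\<lambda>i. f i x) F T \<longleftrightarrow> finite F \<and> T \<in> W \<and> (\<forall>y. has_fsum add z (\<lambda>i. f i x y) F (T y))"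
    if "F \<subseteq> I" for F x T
    using Wfsum_char[of F "\<lambda>i. f i x" T] fW that by blast
  have cont: "((\<exists>t. has_fsum add z (\<lambda>i. f i s y) F t) \<longleftrightarrow> (\<forall>x\<in>D. \<exists>t. has_fsum add z (\<lambda>i. f i x y) F t)) \<and>
    (\<forall>t. has_fsum add z (\<lambda>i. f i s y) F t \<longrightarrow> is_lub_on UNIV le {t'. \<exists>x\<in>D. has_fsum add z (\<lambda>i. f i x y) F t'} t)"
    if "finite F" "F \<subseteq> I" for F y
    using fsum_cont[OF dir that(1) Hy[OF that(2)]] .
  show ?thesis
  proof
    assume hs: "has_sumW add z (\<lambda>i. f i s) I r"
    have hT: "\<forall>F. finite F \<and> F \<subseteq> I \<longrightarrow> (\<exists>T. has_fsum (addW add z) (zeroW z) (\<lambda>i. f i s) F T)"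
      and rl: "is_lub_on W (leW add z) {T. \<exists>F. finite F \<and> F \<subseteq> I \<and> has_fsum (addW add z) (zeroW z) (\<lambda>i. f i s) F T} r"
      using hs unfolding has_sumW_def has_psum_def by blast+
    have Tr: "T y \<preceq> r y" if "finite F" "F \<subseteq> I" "has_fsum (addW add z) (zeroW z) (\<lambda>i. f i s) F T" for F T y
    proof -
      have "leW add z T r" using rl that unfolding is_lub_on_def by blast
      then show ?thesis unfolding leW_iff by blast
    qed
    have step1: "\<exists>T'. has_fsum (addW add z) (zeroW z) (\<lambda>i. f i x) F T' \<and> (\<forall>y. T' y \<preceq> r y)"
      if x: "x \<in> D" and F: "finite F" "F \<subseteq> I" for x F
    proof -
      obtain T where T: "has_fsum (addW add z) (zeroW z) (\<lambda>i. f i s) F T" using hT F by blast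
      have Ty: "has_fsum add z (\<lambda>i. f i s y) F (T y)" for y using char[OF F(2)] T by blast
      have "\<exists>ta. has_fsum add z (\<lambda>i. f i x y) F ta \<and> ta \<preceq> T y" for y
      proof -
        have m: "\<forall>i\<in>F. f i x y \<preceq> f i s y" using fm xs x F by blast
        show ?thesis using fsum_mono[OF Ty m] by simp
      qed
      then obtain T' where T': "\<And>y. has_fsum add z (\<lambda>i. f i x y) F (T' y) \<and> T' y \<preceq> T y" by metis
      have "T' y \<preceq> r y" for y using T' Tr[OF F T] trans by blast
      moreover have "T \<in> W" using char[OF F(2)] T by blast
      then have "T' \<in> W" using W_down T' by blast
      ultimately show ?thesis using char[OF F(2)] T' F by blast
    qed
    define Q where "Q x y = {t. \<exists>F. finite F \<and> F \<subseteq> I \<and> has_fsum add z (\<lambda>i. f i x y) F t}" for x y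
    have Qall: "\<forall>F. finite F \<and> F \<subseteq> I \<longrightarrow> (\<exists>t. has_fsum add z (\<lambda>i. f i x y) F t)" if x: "x \<in> D" for x y
    proof (intro allI impI)
      fix F assume F: "finite F \<and> F \<subseteq> I"
      then obtain T' where "has_fsum (addW add z) (zeroW z) (\<lambda>i. f i x) F T'" using step1[OF x] by blast
      then have "has_fsum add z (\<lambda>i. f i x y) F (T' y)" using char F by blast
      then show "\<exists>t. has_fsum add z (\<lambda>i. f i x y) F t" by blast
    qed
    have "\<exists>p. is_lub_on UNIV le (Q x y) p" if "x \<in> D" for x y
      unfolding Q_def using dlub[OF fsum_directed[OF Qall[OF that]]] .
    then obtain q where q: "\<And>x y. x \<in> D \<Longrightarrow> is_lub_on UNIV le (Q x y) (q x y)" by metis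
    have Qel: "\<exists>F M. has_fsum (addW add z) (zeroW z) (\<lambda>i. f i x) F M \<and> M y = t \<and> (\<forall>y. M y \<preceq> r y)"
      if xt: "x \<in> D" "t \<in> Q x y" for x y t
    proof -
      obtain F where F: "finite F" "F \<subseteq> I" "has_fsum add z (\<lambda>i. f i x y) F t" using xt(2) unfolding Q_def by blast
      obtain M where M: "has_fsum (addW add z) (zeroW z) (\<lambda>i. f i x) F M" "\<forall>y. M y \<preceq> r y" using step1[OF xt(1) F(1,2)] by blast
      have "has_fsum add z (\<lambda>i. f i x y) F (M y)" using char[OF F(2)] M(1) by blast
      then have "M y = t" using funique F(3) by blast
      then show ?thesis using M by blast
    qed
    have qr: "q x y \<preceq> r y" if "x \<in> D" for x y
    proof -
      have "\<forall>t\<in>Q x y. t \<preceq> r y" using Qel[OF that] by blast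
      then show ?thesis using q[OF that] unfolding is_lub_on_def by blast
    qed
    have rW: "r \<in> W" using rl unfolding is_lub_on_def by blast
    have qW: "q x \<in> W" if "x \<in> D" for x using W_down[OF rW] qr[OF that] by blast
    have hsx: "has_sumW add z (\<lambda>i. f i x) I (q x)" if x: "x \<in> D" for x
      unfolding has_sumW_def has_psum_def
    proof (intro conjI)
      show "\<forall>F. finite F \<and> F \<subseteq> I \<longrightarrow> (\<exists>t. has_fsum (addW add z) (zeroW z) (\<lambda>i. f i x) F t)"
        using step1[OF x] by blast
      show "is_lub_on W (leW add z) {t. \<exists>F. finite F \<and> F \<subseteq> I \<and> has_fsum (addW add z) (zeroW z) (\<lambda>i. f i x) F t} (q x)"
        unfolding is_lub_on_def
      proof (intro conjI ballI impI)
        show "q x \<in> W" using qW[OF x] .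
      next
        fix M assume "M \<in> {t. \<exists>F. finite F \<and> F \<subseteq> I \<and> has_fsum (addW add z) (zeroW z) (\<lambda>i. f i x) F t}"
        then obtain F where F: "finite F" "F \<subseteq> I" "has_fsum (addW add z) (zeroW z) (\<lambda>i. f i x) F M" by blast
        then have "M \<in> W" "\<forall>y. M y \<in> Q x y" using char[OF F(2)] unfolding Q_def by blast+
        then show "leW add z M (q x)" unfolding leW_iff using qW[OF x] q[OF x] unfolding is_lub_on_def by blast
      next
        fix u assume u: "u \<in> W" "\<forall>M\<in>{t. \<exists>F. finite F \<and> F \<subseteq> I \<and> has_fsum (addW add z) (zeroW z) (\<lambda>i. f i x) F t}. leW add z M u"
        have "q x y \<preceq> u y" for y
        proof -
          have "t \<preceq> u y" if t: "t \<in> Q x y" for t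
          proof -
            obtain F where F: "finite F" "F \<subseteq> I" "has_fsum add z (\<lambda>i. f i x y) F t" using t unfolding Q_def by blast
            obtain M where M: "has_fsum (addW add z) (zeroW z) (\<lambda>i. f i x) F M" using step1[OF x F(1,2)] by blast
            have "has_fsum add z (\<lambda>i. f i x y) F (M y)" using char[OF F(2)] M(1) by blast
            then have "M y = t" using funique F(3) by blast
            moreover have "leW add z M u" using u(2) F M(1) by blast
            ultimately show ?thesis unfolding leW_iff by blast
          qed
          then show ?thesis using q[OF x] unfolding is_lub_on_def by blast
        qed
        then show "leW add z (q x) u" unfolding leW_iff using qW[OF x] u(1) by blast
      qed
    qed
    have "is_lub_on W (leW add z) (q ` D) r"
      unfolding is_lub_on_def
    proof (intro conjI ballI impI)
      show "r \<in> W" using rW .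
    next
      fix v assume "v \<in> q ` D"
      then obtain x where "x \<in> D" "v = q x" by blast
      then show "leW add z v r" unfolding leW_iff using qW rW qr by blast
    next
      fix u assume u: "u \<in> W" "\<forall>v\<in>q ` D. leW add z v u"
      have "leW add z T u" if T: "T \<in> {T. \<exists>F. finite F \<and> F \<subseteq> I \<and> has_fsum (addW add z) (zeroW z) (\<lambda>i. f i s) F T}" for T
      proof -
        obtain F where F: "finite F" "F \<subseteq> I" "has_fsum (addW add z) (zeroW z) (\<lambda>i. f i s) F T" using T by blast
        have "T y \<preceq> u y" for y
        proof -
          have Ty: "has_fsum add z (\<lambda>i. f i s y) F (T y)" using char[OF F(2)] F(3) by blast
          have "t' \<preceq> u y" if t': "t' \<in> {t'. \<exists>x\<in>D. has_fsum add z (\<lambda>i. f i x y) F t'}" for t'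
          proof -
            obtain x where x: "x \<in> D" "has_fsum add z (\<lambda>i. f i x y) F t'" using t' by blast
            have "t' \<in> Q x y" unfolding Q_def using x F by blast
            then have "t' \<preceq> q x y" using q[OF x(1)] unfolding is_lub_on_def by blast
            moreover have "q x y \<preceq> u y" using u(2) x(1) unfolding leW_iff by blast
            ultimately show ?thesis using trans by blast
          qed
          then show ?thesis using cont[OF F(1,2)] Ty unfolding is_lub_on_def by blast
        qed
        then show ?thesis unfolding leW_iff using u(1) char[OF F(2)] F(3) by blast
      qed
      then show "leW add z r u" using rl u(1) unfolding is_lub_on_def by blast
    qed
    then show "\<exists>g. (\<forall>x\<in>D. has_sumW add z (\<lambda>i. f i x) I (g x)) \<and> is_lub_on W (leW add z) (g ` D) r"
      using hsx by blast
  next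
    assume "\<exists>g. (\<forall>x\<in>D. has_sumW add z (\<lambda>i. f i x) I (g x)) \<and> is_lub_on W (leW add z) (g ` D) r"
    then obtain g where hg: "\<forall>x\<in>D. has_sumW add z (\<lambda>i. f i x) I (g x)" and rl: "is_lub_on W (leW add z) (g ` D) r" by blast
    have hgF: "\<forall>F. finite F \<and> F \<subseteq> I \<longrightarrow> (\<exists>M. has_fsum (addW add z) (zeroW z) (\<lambda>i. f i x) F M)"
      and gl: "is_lub_on W (leW add z) {M. \<exists>F. finite F \<and> F \<subseteq> I \<and> has_fsum (addW add z) (zeroW z) (\<lambda>i. f i x) F M} (g x)"
      if "x \<in> D" for x
      using hg that unfolding has_sumW_def has_psum_def by blast+
    have rW: "r \<in> W" using rl unfolding is_lub_on_def by blast
    have E: "t \<preceq> r y" if x: "x \<in> D" and F: "finite F" "F \<subseteq> I" and t: "has_fsum add z (\<lambda>i. f i x y) F t" for x F y t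
    proof -
      obtain M where M: "has_fsum (addW add z) (zeroW z) (\<lambda>i. f i x) F M" using hgF[OF x] F by blast
      have "has_fsum add z (\<lambda>i. f i x y) F (M y)" using char[OF F(2)] M by blast
      then have "M y = t" using funique t by blast
      moreover have "leW add z M (g x)" using gl[OF x] M F unfolding is_lub_on_def by blast
      moreover have "leW add z (g x) r" using rl x unfolding is_lub_on_def by blast
      ultimately show ?thesis unfolding leW_iff using trans by blast
    qed
    have Tle: "T y \<preceq> r y" if F: "finite F" "F \<subseteq> I" and T: "has_fsum add z (\<lambda>i. f i s y) F (T y)" for F T y
    proof -
      have "\<forall>t'\<in>{t'. \<exists>x\<in>D. has_fsum add z (\<lambda>i. f i x y) F t'}. t' \<preceq> r y" using E F by blast
      then show ?thesis using cont[OF F] T unfolding is_lub_on_def by blast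
    qed
    have exT: "\<exists>T. has_fsum (addW add z) (zeroW z) (\<lambda>i. f i s) F T" if F: "finite F" "F \<subseteq> I" for F
    proof -
      have "\<exists>t. has_fsum add z (\<lambda>i. f i s y) F t" for y
      proof -
        have "\<forall>x\<in>D. \<exists>t. has_fsum add z (\<lambda>i. f i x y) F t"
        proof
          fix x assume x: "x \<in> D"
          obtain M where M: "has_fsum (addW add z) (zeroW z) (\<lambda>i. f i x) F M" using hgF[OF x] F by blast
          then have "has_fsum add z (\<lambda>i. f i x y) F (M y)" using char[OF F(2)] by blast
          then show "\<exists>t. has_fsum add z (\<lambda>i. f i x y) F t" by blast
        qed
        then show ?thesis using cont[OF F] by blast
      qed
      then obtain T where T: "\<And>y. has_fsum add z (\<lambda>i. f i s y) F (T y)" by metis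
      have "T \<in> W" using W_down[OF rW] Tle[OF F] T by blast
      then show ?thesis using char[OF F(2)] T F by blast
    qed
    show "has_sumW add z (\<lambda>i. f i s) I r"
      unfolding has_sumW_def has_psum_def
    proof (intro conjI)
      show "\<forall>F. finite F \<and> F \<subseteq> I \<longrightarrow> (\<exists>t. has_fsum (addW add z) (zeroW z) (\<lambda>i. f i s) F t)"
        using exT by blast
      show "is_lub_on W (leW add z) {t. \<exists>F. finite F \<and> F \<subseteq> I \<and> has_fsum (addW add z) (zeroW z) (\<lambda>i. f i s) F t} r"
        unfolding is_lub_on_def
      proof (intro conjI ballI impI)
        show "r \<in> W" using rW .
      next
        fix T assume "T \<in> {t. \<exists>F. finite F \<and> F \<subseteq> I \<and> has_fsum (addW add z) (zeroW z) (\<lambda>i. f i s) F t}"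
        then obtain F where F: "finite F" "F \<subseteq> I" "has_fsum (addW add z) (zeroW z) (\<lambda>i. f i s) F T" by blast
        then have "T \<in> W" "\<forall>y. has_fsum add z (\<lambda>i. f i s y) F (T y)" using char[OF F(2)] by blast+
        then show "leW add z T r" unfolding leW_iff using rW Tle[OF F(1,2)] by blast
      next
        fix u assume u: "u \<in> W" "\<forall>T\<in>{t. \<exists>F. finite F \<and> F \<subseteq> I \<and> has_fsum (addW add z) (zeroW z) (\<lambda>i. f i s) F t}. leW add z T u"
        have "leW add z (g x) u" if x: "x \<in> D" for x
        proof -
          have "leW add z M u" if M: "M \<in> {M. \<exists>F. finite F \<and> F \<subseteq> I \<and> has_fsum (addW add z) (zeroW z) (\<lambda>i. f i x) F M}" for M
          proof -
            obtain F where F: "finite F" "F \<subseteq> I" "has_fsum (addW add z) (zeroW z) (\<lambda>i. f i x) F M" using M by blast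
            obtain T where T: "has_fsum (addW add z) (zeroW z) (\<lambda>i. f i s) F T" using exT F by blast
            have TU: "leW add z T u" using u(2) T F by blast
            have "M y \<preceq> u y" for y
            proof -
              have My: "has_fsum add z (\<lambda>i. f i x y) F (M y)" using char[OF F(2)] F(3) by blast
              have Ty: "has_fsum add z (\<lambda>i. f i s y) F (T y)" using char[OF F(2)] T by blast
              have "M y \<preceq> T y" using cont[OF F(1,2)] Ty My x unfolding is_lub_on_def by blast
              then show ?thesis using TU trans unfolding leW_iff by blast
            qed
            then show ?thesis unfolding leW_iff using u(1) char[OF F(2)] F(3) by blast
          qed
          then show ?thesis using gl[OF x] u(1) unfolding is_lub_on_def by blast
        qed
        then show "leW add z r u" using rl u(1) unfolding is_lub_on_def by blast
      qed
    qed
  qed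
qed

end

theorem lemmaA1:
  fixes add :: "'a \<Rightarrow> 'a \<Rightarrow> 'a option" and mul :: "'a \<Rightarrow> 'a \<Rightarrow> 'a"
    and z e :: 'a
    and f :: "'i \<Rightarrow> 'x::order \<Rightarrow> 'y \<Rightarrow> 'a" and I :: "'i set"
    and D :: "'x set" and s :: 'x
  assumes "partial_semiring add mul z e"
    and "naturally_ordered add"
    and "scott_continuous_sr add mul"
    and "has_top add"
    and "\<forall>i\<in>I. scott_cont_W add z (f i)"
    and "directed_set (\<le>) D"
    and "is_lub_on UNIV (\<le>) D s"
  shows "\<forall>r. has_sumW add z (\<lambda>i. f i s) I r \<longleftrightarrow>
           (\<exists>g. (\<forall>x\<in>D. has_sumW add z (\<lambda>i. f i x) I (g x)) \<and>
                is_lub_on (Wset add z) (leW add z) (g ` D) r)"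
proof -
  interpret PS add mul z e using assms(1-3) by unfold_locales
  show ?thesis using main[OF assms(5-7)] by blast
qed

end
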